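(* Let $\mathcal{M},\mathcal{N}\in\mathbb{N}$, let $\phi:[0,+\infty)\to(0,1]$ be non-increasing, and let $\boldsymbol{L}\in\mathbb{R}^{\mathcal{M}\times\mathcal{N}}$ be $\phi$-multiplicatively badly approximable. Let $\varepsilon,T>0$, $\boldsymbol{Q}\in[1,+\infty)^{\mathcal{N}}$ and $Q:=(Q_1\cdots Q_{\mathcal{N}})^{1/\mathcal{N}}$. If $\varepsilon Q^{\mathcal{N}}/\phi(Q)<1$, then $\Lambda_{\boldsymbol{L}}\cap Z\subset C$.
   Context: $\|x\|$ is the distance from $x\in\mathbb{R}$ to the nearest integer, $L_i\boldsymbol{q}=\sum_jL_{ij}q_j$ for the rows $L_i$ of $\boldsymbol{L}$. $\boldsymbol{L}$ is $\phi$-multiplicatively badly approximable if for all $\boldsymbol{q}\in\mathbb{Z}^{\mathcal{N}}\setminus\{\boldsymbol{0}\}$, $\prod_{j}\max\{1,|q_j|\}\prod_{i}\|L_i\boldsymbol{q}\|\ge\phi\big((\prod_j\max\{1,|q_j|\})^{1/\mathcal{N}}\big)$. $\Lambda_{\boldsymbol{L}}:=\{(L_1\boldsymbol{q}+p_1,\dots,L_{\mathcal{M}}\boldsymbol{q}+p_{\mathcal{M}},\boldsymbol{q}):\boldsymbol{p}\in\mathbb{Z}^{\mathcal{M}},\boldsymbol{q}\in\mathbb{Z}^{\mathcal{N}}\}$; $H:=\{\boldsymbol{x}\in\mathbb{R}^{\mathcal{M}}:\prod_i|x_i|<\varepsilon,\ |x_i|\le T\ \forall i\}$; $Z:=H\times\prod_{j=1}^{\mathcal{N}}[-Q_j,Q_j]$;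 $C:=\{(\boldsymbol{x},\boldsymbol{y})\in\mathbb{R}^{\mathcal{M}}\times\mathbb{R}^{\mathcal{N}}:\boldsymbol{y}=\boldsymbol{0}\}$. *)

theory Defs
  imports "HOL-Analysis.Analysis"
begin

definition dist_int :: "real \<Rightarrow> real" where
  "dist_int x = \<bar>x - of_int (round x)\<bar>"

definition row_apply :: "real^'n^'m \<Rightarrow> 'm \<Rightarrow> int^'n \<Rightarrow> real" where
  "row_apply L i q = (\<Sum>j\<in>UNIV. L $ i $ j * of_int (q $ j))"

definition mult_badly_approx :: "(real \<Rightarrow> real) \<Rightarrow> real^'n^'m \<Rightarrow> bool" where
  "mult_badly_approx \<phi> L \<longleftrightarrow>
     (\<forall>q::int^'n. q \<noteq> 0 \<longrightarrow>
        (\<Prod>j\<in>UNIV. max 1 \<bar>real_of_int (q $ j)\<bar>) * (\<Prod>i\<in>UNIV. dist_int (row_apply L i q))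
        \<ge> \<phi> ((\<Prod>j\<in>UNIV. max 1 \<bar>real_of_int (q $ j)\<bar>) powr (1 / real CARD('n))))"

definition lattice_L :: "real^'n^'m \<Rightarrow> ((real^'m) \<times> (real^'n)) set" where
  "lattice_L L = {((\<chi> i. row_apply L i q + of_int (p $ i)), (\<chi> j. real_of_int (q $ j))) | p q.
                   (p :: int^'m) \<in> UNIV \<and> (q :: int^'n) \<in> UNIV}"

definition H_set :: "real \<Rightarrow> real \<Rightarrow> (real^'m) set" where
  "H_set \<epsilon> T = {x. (\<Prod>i\<in>UNIV. \<bar>x $ i\<bar>) < \<epsilon> \<and> (\<forall>i. \<bar>x $ i\<bar> \<le> T)}"

definition Z_set :: "real \<Rightarrow> real \<Rightarrow> real^'n \<Rightarrow> ((real^'m) \<times> (real^'n)) set" where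
  "Z_set \<epsilon> T Q = H_set \<epsilon> T \<times> {y. \<forall>j. -(Q $ j) \<le> y $ j \<and> y $ j \<le> Q $ j}"

definition C_set :: "((real^'m) \<times> (real^'n)) set" where
  "C_set = {(x, y). y = 0}"

end

theory Submission
  imports Defs
begin

theorem lemma2p5:
  fixes \<phi> :: "real \<Rightarrow> real"
    and L :: "real^'n^'m"
    and \<epsilon> T :: real
    and Q :: "real^'n"
  assumes phi_range: "\<And>t. t \<ge> 0 \<Longrightarrow> 0 < \<phi> t \<and> \<phi> t \<le> 1"
    and phi_mono: "\<And>s t. 0 \<le> s \<Longrightarrow> s \<le> t \<Longrightarrow> \<phi> t \<le> \<phi> s"
    and bad: "mult_badly_approx \<phi> L"
    and eps_pos: "\<epsilon> > 0" and T_pos: "T > 0"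
    and Q_ge: "\<And>j. Q $ j \<ge> 1"
    and small: "\<epsilon> * ((\<Prod>j\<in>UNIV. Q $ j) powr (1 / real CARD('n))) ^ CARD('n)
                 / \<phi> ((\<Prod>j\<in>UNIV. Q $ j) powr (1 / real CARD('n))) < 1"
  shows "lattice_L L \<inter> Z_set \<epsilon> T Q \<subseteq> (C_set :: ((real^'m) \<times> (real^'n)) set)"
proof
  fix z assume z: "z \<in> lattice_L L \<inter> Z_set \<epsilon> T Q"
  then obtain p :: "int^'m" and q :: "int^'n" where
    zeq: "z = ((\<chi> i. row_apply L i q + of_int (p $ i)), (\<chi> j. real_of_int (q $ j)))"
    unfolding lattice_L_def by blast
  define x where "x = (\<chi> i. row_apply L i q + of_int (p $ i))"
  have xprod: "(\<Prod>i\<in>UNIV. \<bar>x $ i\<bar>) < \<epsilon>" and qb0: "\<forall>j. -(Q $ j) \<le> real_of_int (q $ j) \<and> real_of_int (q $ j) \<le> Q $ j"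
    using z unfolding zeq x_def[symmetric] Z_set_def H_set_def by auto
  have qb: "\<bar>real_of_int (q $ j)\<bar> \<le> Q $ j" for j using qb0[rule_format, of j] by linarith
  show "z \<in> C_set"
  proof (rule ccontr)
    assume "z \<notin> C_set"
    hence qnz: "q \<noteq> 0" unfolding zeq C_set_def by (auto simp: vec_eq_iff)
    define P where "P = (\<Prod>j\<in>UNIV. max 1 \<bar>real_of_int (q $ j)\<bar>)"
    define A where "A = (\<Prod>j\<in>UNIV. Q $ j) powr (1 / real CARD('n))"
    have Qpos: "(\<Prod>j\<in>UNIV. Q $ j) > 0" using Q_ge by (meson less_le_trans prod_pos zero_less_one)
    have AN: "A ^ CARD('n) = (\<Prod>j\<in>UNIV. Q $ j)"
    proof -
      have "(\<Prod>j\<in>UNIV. Q $ j) powr (1 / real CARD('n)) > 0" using Qpos by (rule powr_gt_zero[THEN iffD2, OF less_imp_neq[symmetric]] | simp add: less_imp_neq[symmetric])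
      hence "A ^ CARD('n) = A powr real CARD('n)" unfolding A_def by (simp add: powr_realpow)
      also have "\<dots> = (\<Prod>j\<in>UNIV. Q $ j)" unfolding A_def using Qpos by (simp add: powr_powr)
      finally show ?thesis .
    qed
    have Ppos: "P > 0" unfolding P_def by (intro prod_pos) auto
    have PQ: "P \<le> (\<Prod>j\<in>UNIV. Q $ j)" unfolding P_def
      by (intro prod_mono) (use Q_ge qb in \<open>auto intro: max.boundedI\<close>)
    have PA: "P powr (1 / real CARD('n)) \<le> A" unfolding A_def
      using PQ Ppos by (intro powr_mono2) auto
    have phiA: "\<phi> A \<le> \<phi> (P powr (1 / real CARD('n)))"
      using PA by (intro phi_mono) auto
    have Apos: "A \<ge> 0" unfolding A_def by simp
    have phiApos: "\<phi> A > 0" using phi_range Apos by blast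
    have smallA: "\<epsilon> * A ^ CARD('n) < \<phi> A" using small phiApos unfolding A_def[symmetric]
      by (simp add: divide_less_eq)
    have dist: "dist_int (row_apply L i q) \<le> \<bar>x $ i\<bar>" for i
    proof -
      have "dist_int (row_apply L i q) \<le> \<bar>row_apply L i q - of_int (- (p $ i))\<bar>"
        unfolding dist_int_def by (rule round_diff_minimal)
      thus ?thesis unfolding x_def by simp
    qed
    have dprod: "(\<Prod>i\<in>UNIV. dist_int (row_apply L i q)) \<le> (\<Prod>i\<in>UNIV. \<bar>x $ i\<bar>)"
      by (intro prod_mono conjI dist) (simp add: dist_int_def)
    have "\<phi> (P powr (1 / real CARD('n))) \<le> P * (\<Prod>i\<in>UNIV. dist_int (row_apply L i q))"
      using bad qnz unfolding mult_badly_approx_def P_def by blast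
    also have "\<dots> \<le> P * (\<Prod>i\<in>UNIV. \<bar>x $ i\<bar>)" using dprod Ppos by simp
    also have "\<dots> < P * \<epsilon>" using xprod Ppos by simp
    also have "\<dots> \<le> (\<Prod>j\<in>UNIV. Q $ j) * \<epsilon>" using PQ eps_pos by simp
    also have "\<dots> = \<epsilon> * A ^ CARD('n)" using AN by simp
    finally show False using smallA phiA by linarith
  qed
qed

end
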